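(* Let $N$ be a natural number, $P=\{a\subseteq N: |a|\geq 2\}$, and let $\|\cdot\|_3$ be the graph coloring norm on subsets of $P$ (defined in the context). If $A\subseteq P$ and $\|A\|_3=k$, then \[|A|\leq 2^N-2^k\,2^{N/2^k}+2^k-1.\]
   Context: $N=\{0,\ldots,N-1\}$. For $A\subseteq P$ and $z\subseteq N$ let $A\restriction z=\{a\in A: a\subseteq z\}$. The relation "$\|A\|_3\geq m$" is defined recursively: $\|A\|_3\geq 0$ always; $\|A\|_3\geq 1$ iff $A\neq\emptyset$; for $m\geq 1$, $\|A\|_3\geq m+1$ iff for every $z\subseteq N$ either $\|A\restriction z\|_3\geq m$ or $\|A\restriction(N\setminus z)\|_3\geq m$. Then $\|A\|_3$ is the largest $m$ with $\|A\|_3\geq m$. *)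

theory Defs
  imports Complex_Main
begin

text \<open>The ground set N = {0,...,N-1} is rendered as {..<N}.\<close>

definition restr :: "nat set set \<Rightarrow> nat set \<Rightarrow> nat set set" where
  "restr A z = {a \<in> A. a \<subseteq> z}"

fun norm3_ge :: "nat \<Rightarrow> nat set set \<Rightarrow> nat \<Rightarrow> bool" where
  "norm3_ge N A 0 = True"
| "norm3_ge N A (Suc 0) = (A \<noteq> {})"
| "norm3_ge N A (Suc (Suc m)) =
     (\<forall>z. z \<subseteq> {..<N} \<longrightarrow>
        norm3_ge N (restr A z) (Suc m) \<or> norm3_ge N (restr A ({..<N} - z)) (Suc m))"

definition norm3 :: "nat \<Rightarrow> nat set set \<Rightarrow> nat" where
  "norm3 N A = (GREATEST m. norm3_ge N A m)"

end

theory Submission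
  imports Defs
begin

lemma ne_of_ge: "norm3_ge N A (Suc m) \<Longrightarrow> A \<noteq> {}"
proof (induction m arbitrary: A)
  case 0 then show ?case by simp
next
  case (Suc m)
  have "norm3_ge N (restr A {}) (Suc m) \<or> norm3_ge N (restr A ({..<N} - {})) (Suc m)"
    using Suc.prems by (simp only: norm3_ge.simps) blast
  then show ?case using Suc.IH by (auto simp: restr_def)
qed

lemma ge_mono1: "norm3_ge N A (Suc m) \<Longrightarrow> norm3_ge N A m"
proof (induction m arbitrary: A)
  case 0 then show ?case by simp
next
  case (Suc m)
  show ?case
  proof (cases m)
    case 0 then show ?thesis using ne_of_ge[OF Suc.prems] by simp
  next
    case (Suc m')
    have "\<forall>z. z \<subseteq> {..<N} \<longrightarrow>
        norm3_ge N (restr A z) (Suc m) \<or> norm3_ge N (restr A ({..<N} - z)) (Suc m)"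
      using Suc.prems by (simp only: norm3_ge.simps)
    then have "\<forall>z. z \<subseteq> {..<N} \<longrightarrow>
        norm3_ge N (restr A z) m \<or> norm3_ge N (restr A ({..<N} - z)) m"
      using Suc.IH by blast
    then show ?thesis using Suc by (simp only: norm3_ge.simps)
  qed
qed

lemma ge_mono: "norm3_ge N A m \<Longrightarrow> n \<le> m \<Longrightarrow> norm3_ge N A n"
proof (induction m)
  case 0 then show ?case by simp
next
  case (Suc m)
  show ?case
  proof (cases "n = Suc m")
    case True then show ?thesis using Suc.prems by simp
  next
    case False
    then have "n \<le> m" using Suc.prems(2) by simp
    moreover have "norm3_ge N A m" using ge_mono1[of N A m] Suc.prems(1) by blast
    ultimately show ?thesis using Suc.IH by blast
  qed
qed

definition col :: "nat \<Rightarrow> nat set set \<Rightarrow> bool" where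
  "col j A = (\<exists>f::nat\<Rightarrow>nat. (\<forall>x. f x < 2^j) \<and> (\<forall>a\<in>A. \<exists>x\<in>a. \<exists>y\<in>a. f x \<noteq> f y))"

lemma col_not_ge: "col j A \<Longrightarrow> \<not> norm3_ge N A (Suc j)"
proof (induction j arbitrary: A)
  case 0
  from 0 obtain f :: "nat \<Rightarrow> nat" where f: "\<forall>x. f x < 2^0" "\<forall>a\<in>A. \<exists>x\<in>a. \<exists>y\<in>a. f x \<noteq> f y"
    unfolding col_def by blast
  then have "\<forall>x. f x = 0" by simp
  then have "A = {}" using f(2) by auto
  then show ?case by simp
next
  case (Suc j)
  from Suc.prems obtain f :: "nat \<Rightarrow> nat" where f: "\<forall>x. f x < 2^Suc j" "\<forall>a\<in>A. \<exists>x\<in>a. \<exists>y\<in>a. f x \<noteq> f y"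
    unfolding col_def by blast
  define z where "z = {x\<in>{..<N}. f x < 2^j}"
  have "col j (restr A z)"
    unfolding col_def
  proof (intro exI[of _ "\<lambda>x. if f x < 2^j then f x else 0"] conjI allI ballI)
    fix x show "(if f x < 2^j then f x else 0) < (2::nat)^j" by simp
  next
    fix a assume "a \<in> restr A z"
    then have "a \<in> A" "a \<subseteq> z" by (auto simp: restr_def)
    then obtain x y where "x \<in> a" "y \<in> a" "f x \<noteq> f y" using f by blast
    then show "\<exists>x\<in>a. \<exists>y\<in>a. (if f x < 2^j then f x else 0) \<noteq> (if f y < 2^j then f y else 0)"
      using \<open>a \<subseteq> z\<close> by (intro bexI[of _ x] bexI[of _ y]) (auto simp: z_def)
  qed
  moreover have "col j (restr A ({..<N} - z))"
    unfolding col_def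
  proof (intro exI[of _ "\<lambda>x. f x - 2^j"] conjI allI ballI)
    fix x show "f x - 2^j < 2^j" using f(1)[rule_format, of x] by auto
  next
    fix a assume "a \<in> restr A ({..<N} - z)"
    then have "a \<in> A" "a \<subseteq> {..<N} - z" by (auto simp: restr_def)
    then obtain x y where "x \<in> a" "y \<in> a" "f x \<noteq> f y" using f by blast
    moreover have "f x \<ge> 2^j" "f y \<ge> 2^j" using \<open>a \<subseteq> {..<N} - z\<close> \<open>x \<in> a\<close> \<open>y \<in> a\<close>
      by (auto simp: z_def)
    ultimately have "f x - 2^j \<noteq> f y - 2^j" by linarith
    then show "\<exists>x\<in>a. \<exists>y\<in>a. f x - 2^j \<noteq> f y - 2^j" using \<open>x \<in> a\<close> \<open>y \<in> a\<close> by blast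
  qed
  moreover have "z \<subseteq> {..<N}" by (auto simp: z_def)
  ultimately have "\<not> norm3_ge N (restr A z) (Suc j)" "\<not> norm3_ge N (restr A ({..<N} - z)) (Suc j)"
    "z \<subseteq> {..<N}" using Suc.IH by blast+
  then show ?case by (simp only: norm3_ge.simps) blast
qed

lemma not_ge_col: "A \<subseteq> Pow {..<N} \<Longrightarrow> \<not> norm3_ge N A (Suc k) \<Longrightarrow> col k A"
proof (induction k arbitrary: A)
  case 0
  then show ?case by (auto simp: col_def)
next
  case (Suc k)
  then obtain z where z: "z \<subseteq> {..<N}" "\<not> norm3_ge N (restr A z) (Suc k)"
    "\<not> norm3_ge N (restr A ({..<N} - z)) (Suc k)" by (simp only: norm3_ge.simps) blast
  have "restr A z \<subseteq> Pow {..<N}" "restr A ({..<N} - z) \<subseteq> Pow {..<N}"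
    using Suc.prems by (auto simp: restr_def)
  then have "col k (restr A z)" "col k (restr A ({..<N} - z))" using Suc.IH z by blast+
  then obtain f1 f2 :: "nat \<Rightarrow> nat" where f1: "\<forall>x. f1 x < 2^k" "\<forall>a\<in>restr A z. \<exists>x\<in>a. \<exists>y\<in>a. f1 x \<noteq> f1 y"
    and f2: "\<forall>x. f2 x < 2^k" "\<forall>a\<in>restr A ({..<N} - z). \<exists>x\<in>a. \<exists>y\<in>a. f2 x \<noteq> f2 y"
    unfolding col_def by blast
  show ?case unfolding col_def
  proof (intro exI[of _ "\<lambda>x. if x \<in> z then f1 x else 2^k + f2 x"] conjI allI ballI)
    fix x show "(if x \<in> z then f1 x else 2^k + f2 x) < 2^Suc k"
      using f1(1)[rule_format, of x] f2(1)[rule_format, of x] by auto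
  next
    fix a assume aA: "a \<in> A"
    then have aN: "a \<subseteq> {..<N}" using Suc.prems by auto
    show "\<exists>x\<in>a. \<exists>y\<in>a. (if x \<in> z then f1 x else 2^k + f2 x) \<noteq> (if y \<in> z then f1 y else 2^k + f2 y)"
    proof (cases "a \<subseteq> z")
      case True
      then have "a \<in> restr A z" using aA by (auto simp: restr_def)
      then obtain x y where "x \<in> a" "y \<in> a" "f1 x \<noteq> f1 y" using f1 by blast
      moreover have "x \<in> z" "y \<in> z" using True \<open>x \<in> a\<close> \<open>y \<in> a\<close> by auto
      ultimately show ?thesis by (intro bexI[of _ x] bexI[of _ y]) auto
    next
      case False
      show ?thesis
      proof (cases "a \<subseteq> {..<N} - z")
        case True
        then have "a \<in> restr A ({..<N} - z)" using aA by (auto simp: restr_def)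
        then obtain x y where "x \<in> a" "y \<in> a" "f2 x \<noteq> f2 y" using f2 by blast
        moreover have "x \<notin> z" "y \<notin> z" using True \<open>x \<in> a\<close> \<open>y \<in> a\<close> by auto
        ultimately show ?thesis by (intro bexI[of _ x] bexI[of _ y]) auto
      next
        case F2: False
        obtain x where x: "x \<in> a" "x \<notin> z" using False by auto
        obtain y where y: "y \<in> a" "y \<in> z" using F2 aN by auto
        have "f1 y < 2^k" using f1(1) by auto
        then show ?thesis using x y by (intro bexI[of _ x] bexI[of _ y]) auto
      qed
    qed
  qed
qed

lemma count:
  fixes f :: "nat \<Rightarrow> nat" and K N :: nat
  assumes AP: "A \<subseteq> Pow {..<N}" and fK: "\<forall>x. f x < K" and K: "K > 0"
    and colA: "\<forall>a\<in>A. \<exists>x\<in>a. \<exists>y\<in>a. f x \<noteq> f y"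
  shows "real (card A) \<le> 2^N - K * 2 powr (real N / K) + K - 1"
proof -
  define V where "V i = {x\<in>{..<N}. f x = i}" for i
  define U where "U = (\<Union>i<K. Pow (V i))"
  have finV: "finite (V i)" for i by (auto simp: V_def)
  have AU: "A \<subseteq> Pow {..<N} - U"
  proof
    fix a assume a: "a \<in> A"
    have "a \<notin> U"
    proof
      assume "a \<in> U"
      then obtain i where "a \<subseteq> V i" by (auto simp: U_def)
      then have "\<forall>x\<in>a. f x = i" by (auto simp: V_def)
      then show False using colA a by metis
    qed
    then show "a \<in> Pow {..<N} - U" using a AP by auto
  qed
  have UP: "U \<subseteq> Pow {..<N}" by (auto simp: U_def V_def)
  have finU: "finite U" using UP finite_subset by blast
  have "card A \<le> card (Pow {..<N} - U)" by (rule card_mono) (use AU in auto)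
  also have "\<dots> = 2^N - card U" using card_Diff_subset[OF finU UP] by (simp add: card_Pow)
  finally have cA: "card A \<le> 2^N - card U" .
  have cU_le: "card U \<le> 2^N" using card_mono[OF _ UP] by (simp add: card_Pow)
  have U_eq: "U = insert {} (\<Union>i<K. Pow (V i) - {{}})" using K by (auto simp: U_def)
  have "card (\<Union>i<K. Pow (V i) - {{}}) = (\<Sum>i<K. card (Pow (V i) - {{}}))"
  proof (rule card_UN_disjoint)
    show "\<forall>i\<in>{..<K}. \<forall>j\<in>{..<K}. i \<noteq> j \<longrightarrow> (Pow (V i) - {{}}) \<inter> (Pow (V j) - {{}}) = {}"
      by (auto simp: V_def)
  qed (auto simp: finV)
  also have "\<dots> = (\<Sum>i<K. 2^card (V i) - 1)"
    by (rule sum.cong) (auto simp: card_Diff_singleton finV card_Pow)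
  finally have cU: "card U = 1 + (\<Sum>i<K. 2^card (V i) - 1)"
    unfolding U_eq by (subst card_insert_disjoint) (auto simp: finV)
  have "real (card U) = 1 + (\<Sum>i<K. 2 powr real (card (V i)) - 1)"
    unfolding cU by (simp add: of_nat_diff powr_realpow)
  also have "\<dots> = 1 - real K + (\<Sum>i<K. 2 powr real (card (V i)))"
  proof -
    have "(\<Sum>i<K. 2 powr real (card (V i)) - 1) = (\<Sum>i<K. 2 powr real (card (V i))) - real K"
      by (simp add: sum_subtractf)
    then show ?thesis by linarith
  qed
  finally have rU: "real (card U) = 1 - real K + (\<Sum>i<K. 2 powr real (card (V i)))" .
  have "{..<N} = (\<Union>i<K. V i)" using fK by (auto simp: V_def)
  then have "N = card (\<Union>i<K. V i)" by (metis card_lessThan)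
  also have "\<dots> = (\<Sum>i<K. card (V i))"
    by (rule card_UN_disjoint) (auto simp: finV V_def)
  finally have sN: "real N = (\<Sum>i<K. real (card (V i)))" by simp
  define c where "c = real N / K"
  have tang: "2 powr t \<ge> 2 powr c * (1 + ln 2 * (t - c))" for t :: real
  proof -
    have "2 powr t = 2 powr c * 2 powr (t - c)" by (simp flip: powr_add)
    also have "2 powr (t - c) = exp (ln 2 * (t - c))" by (simp add: powr_def)
    finally show ?thesis
      using exp_ge_add_one_self[of "ln 2 * (t - c)"]
      by (simp add: mult_left_mono)
  qed
  have "(\<Sum>i<K. 2 powr c * (1 + ln 2 * (real (card (V i)) - c))) \<le> (\<Sum>i<K. 2 powr real (card (V i)))"
    by (rule sum_mono) (rule tang)
  moreover have "(\<Sum>i<K. 2 powr c * (1 + ln 2 * (real (card (V i)) - c)))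
      = 2 powr c * (K + ln 2 * ((\<Sum>i<K. real (card (V i))) - K * c))"
    by (simp add: sum_distrib_left sum_distrib_right sum.distrib sum_subtractf algebra_simps)
  moreover have "(\<Sum>i<K. real (card (V i))) - K * c = 0" using K sN by (simp add: c_def)
  ultimately have am: "K * 2 powr c \<le> (\<Sum>i<K. 2 powr real (card (V i)))" by (simp add: mult.commute)
  have "real (card A) \<le> 2^N - real (card U)" using cA cU_le
    by (metis of_nat_diff of_nat_le_iff of_nat_numeral of_nat_power)
  then show ?thesis using rU am by (simp add: c_def)
qed

theorem theorem5p37:
  fixes N k :: nat and A :: "nat set set"
  assumes "A \<subseteq> {a. a \<subseteq> {..<N} \<and> card a \<ge> 2}"
    and "norm3 N A = k"
  shows "real (card A) \<le> 2 ^ N - 2 ^ k * 2 powr (real N / 2 ^ k) + 2 ^ k - 1"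
proof -
  have AP: "A \<subseteq> Pow {..<N}" using assms(1) by auto
  have colN: "col N A" unfolding col_def
  proof (intro exI[of _ "\<lambda>x. if x < N then x else 0"] conjI allI ballI)
    fix x show "(if x < N then x else 0) < (2::nat)^N"
      using less_exp[of N] by (auto intro: less_trans)
  next
    fix a assume "a \<in> A"
    then have a: "a \<subseteq> {..<N}" "card a \<ge> 2" using assms(1) by auto
    have "finite a" using a(1) finite_subset by blast
    moreover have "\<not> card a \<le> Suc 0" using a(2) by simp
    ultimately obtain x y where "x \<in> a" "y \<in> a" "x \<noteq> y"
      using card_le_Suc0_iff_eq by blast
    then show "\<exists>x\<in>a. \<exists>y\<in>a. (if x < N then x else 0) \<noteq> (if y < N then y else 0)"
      using a by (intro bexI[of _ x] bexI[of _ y]) auto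
  qed
  have bound: "\<forall>m. norm3_ge N A m \<longrightarrow> m \<le> N"
  proof (intro allI impI, rule ccontr)
    fix m assume m: "norm3_ge N A m" "\<not> m \<le> N"
    have "norm3_ge N A (Suc N)" using m ge_mono[of N A m "Suc N"] by simp
    then show False using col_not_ge[OF colN] by simp
  qed
  have nk: "\<not> norm3_ge N A (Suc k)"
  proof
    assume "norm3_ge N A (Suc k)"
    then have "Suc k \<le> norm3 N A" unfolding norm3_def by (rule Greatest_le_nat) (use bound in auto)
    then show False using assms(2) by simp
  qed
  obtain f :: "nat \<Rightarrow> nat" where f: "\<forall>x. f x < (2::nat)^k" "\<forall>a\<in>A. \<exists>x\<in>a. \<exists>y\<in>a. f x \<noteq> f y"
    using not_ge_col[OF AP nk] unfolding col_def by blast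
  have "0 < (2::nat)^k" by simp
  note c = count[OF AP f(1) this f(2)]
  have e: "real ((2::nat)^k) = 2^k" by simp
  show ?thesis using c unfolding e .
qed

end
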